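(* The system $\dot d_k=(1+\alpha d_k)(c_k^{(1)}-c_{k-1}^{(1)})$, $\dot c_k^{(j)}=c_k^{(j)}(d_{k+j}-d_k+\alpha c_{k+j}^{(1)}-\alpha c_{k-1}^{(1)})+(c_k^{(j+1)}-c_{k-1}^{(j+1)})$ ($1\le j\le m-1$), $\dot c_k^{(m)}=c_k^{(m)}(d_{k+m}-d_k+\alpha c_{k+m}^{(1)}-\alpha c_{k-1}^{(1)})$ is Hamiltonian with respect to the bracket $\{\cdot,\cdot\}_{2\alpha}$ with Hamilton function $H=\alpha^{-1}\sum_{k=1}^Nd_k+\sum_{k=1}^Nc_k^{(1)}$.
   Context: $N\ge2m+2$, $m\ge1$, $\alpha\neq0$ real, subscripts modulo $N$; phase space $\mathbb R^{(m+1)N}$ with coordinates $d_k,c_k^{(j)}$ ($1\le k\le N$, $1\le j\le m$); convention $c_k^{(p)}=0$ for $p>m$. The bracket $\{\cdot,\cdot\}_{2\alpha}$ is defined by: $\{d_k,d_l\}_{2\alpha}=0$; $\{d_k,c_k^{(j)}\}_{2\alpha}=-c_k^{(j)}(1+\alpha d_k)$, $\{c_k^{(j)},d_{k+j}\}_{2\alpha}=-c_k^{(j)}(1+\alpha d_{k+j})$; $\{c_k^{(i)},c_{k+i}^{(j)}\}_{2\alpha}=-c_k^{(i+j)}-\alpha c_k^{(i)}c_{k+i}^{(j)}$; for $i\le j$, $1\le\ell\le i-1$: $\{c_k^{(i)},c_{k+\ell}^{(j)}\}_{2\alpha}=-\alpha c_k^{(i)}c_{k+\ell}^{(j)}+\alpha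 c_k^{(j+\ell)}c_{k+\ell}^{(i-\ell)}$; for $i\le j$, $j-i+1\le\ell\le j-1$: $\{c_k^{(j)},c_{k+\ell}^{(i)}\}_{2\alpha}=-\alpha c_k^{(j)}c_{k+\ell}^{(i)}+\alpha c_k^{(i+\ell)}c_{k+\ell}^{(j-\ell)}$; all other coordinate brackets (up to antisymmetry) are zero. Hamiltonian system: $\dot x=\{H,x\}$ for each coordinate $x$. *)

theory Defs
  imports "HOL-Analysis.Analysis"
begin

text \<open>Phase-space coordinates: D k is d_k, C j k is c_k^(j).
  Lattice index k ranges over 0..N-1 (representing Z/NZ); j over 1..m.\<close>
datatype coord = D nat | C nat nat

type_synonym state = "coord \<Rightarrow> real"

definition coords :: "nat \<Rightarrow> nat \<Rightarrow> coord set" where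
  "coords N m = {D k | k. k < N} \<union> {C j k | j k. 1 \<le> j \<and> j \<le> m \<and> k < N}"

definition dd :: "nat \<Rightarrow> state \<Rightarrow> int \<Rightarrow> real" where
  "dd N p k = p (D (nat (k mod int N)))"

text \<open>c_k^(j) with k modulo N and the convention c^(p) = 0 for p > m (and p = 0)\<close>
definition cc :: "nat \<Rightarrow> nat \<Rightarrow> state \<Rightarrow> nat \<Rightarrow> int \<Rightarrow> real" where
  "cc N m p j k = (if 1 \<le> j \<and> j \<le> m then p (C j (nat (k mod int N))) else 0)"

text \<open>The brackets of coordinates listed explicitly in the definition of the
  bracket (in the stated order of arguments); None = not listed.
  For c-c brackets, with l = (k2 - k1) mod N:
   l = a : {c_k^(a), c_(k+a)^(b)} = -c_k^(a+b) - alpha c_k^(a) c_(k+a)^(b);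
   1 \<le> l \<le> a-1 and (a \<le> b or l \<ge> a-b+1): the two families of the definition
   (case i=a \<le> j=b, and case j=a \<ge> i=b), which both read
   {c_k^(a), c_(k+l)^(b)} = -alpha c_k^(a) c_(k+l)^(b) + alpha c_k^(b+l) c_(k+l)^(a-l).\<close>
fun listed :: "nat \<Rightarrow> nat \<Rightarrow> real \<Rightarrow> coord \<Rightarrow> coord \<Rightarrow> state \<Rightarrow> real option" where
  "listed N m \<alpha> (D k1) (C j k2) p =
     (if k1 = k2 then Some (- cc N m p j (int k2) * (1 + \<alpha> * dd N p (int k1))) else None)"
| "listed N m \<alpha> (C j k1) (D k2) p =
     (if k2 = nat ((int k1 + int j) mod int N)
      then Some (- cc N m p j (int k1) * (1 + \<alpha> * dd N p (int k2))) else None)"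
| "listed N m \<alpha> (C a k1) (C b k2) p =
     (let l = nat ((int k2 - int k1) mod int N); k = int k1 in
      if l = a then Some (- cc N m p (a + b) k - \<alpha> * cc N m p a k * cc N m p b (k + int a))
      else if 1 \<le> l \<and> l + 1 \<le> a \<and> (a \<le> b \<or> a - b + 1 \<le> l)
      then Some (- \<alpha> * cc N m p a k * cc N m p b (k + int l)
                 + \<alpha> * cc N m p (b + l) k * cc N m p (a - l) (k + int l))
      else None)"
| "listed N m \<alpha> (D k1) (D k2) p = None"

definition br :: "nat \<Rightarrow> nat \<Rightarrow> real \<Rightarrow> coord \<Rightarrow> coord \<Rightarrow> state \<Rightarrow> real" where
  "br N m \<alpha> x y p = (case listed N m \<alpha> x y p of Some v \<Rightarrow> v
      | None \<Rightarrow> (case listed N m \<alpha> y x p of Some v \<Rightarrow> - v | None \<Rightarrow> 0))"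

definition pd :: "(state \<Rightarrow> real) \<Rightarrow> coord \<Rightarrow> state \<Rightarrow> real" where
  "pd F y p = deriv (\<lambda>t. F (p(y := t))) (p y)"

definition pbr :: "nat \<Rightarrow> nat \<Rightarrow> real \<Rightarrow> (state \<Rightarrow> real) \<Rightarrow> coord \<Rightarrow> state \<Rightarrow> real" where
  "pbr N m \<alpha> F x p = (\<Sum>y\<in>coords N m. pd F y p * br N m \<alpha> y x p)"

definition Ham :: "nat \<Rightarrow> real \<Rightarrow> state \<Rightarrow> real" where
  "Ham N \<alpha> p = (1 / \<alpha>) * (\<Sum>k<N. p (D k)) + (\<Sum>k<N. p (C 1 k))"

end

theory Submission imports Defs begin

lemma natmod: "k < N \<Longrightarrow> k' < N \<Longrightarrow> nat ((int k - int k') mod int N) = (k + N - k') mod N"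
proof -
  assume a: "k < N" "k' < N"
  have "int ((k + N - k') mod N) = int (k + N - k') mod int N" by (simp add: of_nat_mod)
  also have "int (k + N - k') = (int k - int k') + int N" using a by simp
  finally show ?thesis by simp
qed

lemma natmod2: "nat ((int k + int j) mod int N) = (k + j) mod N"
  by (metis nat_int of_nat_add of_nat_mod)

lemma cc_cong: "a mod int N = b mod int N \<Longrightarrow> cc N m p j a = cc N m p j b"
  by (simp add: cc_def)
lemma dd_cong: "a mod int N = b mod int N \<Longrightarrow> dd N p a = dd N p b"
  by (simp add: dd_def)


lemma mod_suc_if: "(k'::nat) < N \<Longrightarrow> (k' + 1) mod N = (if k' + 1 = N then 0 else k' + 1)"
  by (simp add: mod_if)


lemma pre_iff: "(k::nat) < N \<Longrightarrow> k' < N \<Longrightarrow> (k = (k' + 1) mod N) = (k' = (k + N - 1) mod N)"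
proof -
  assume a: "k < N" "k' < N"
  have r: "(k + N - 1) mod N = (if k = 0 then N - 1 else k - 1)"
  proof (cases "k = 0")
    case True then show ?thesis using a by simp
  next
    case False
    have "k + N - 1 = (k - 1) + N" using False a by simp
    then show ?thesis using False a by (simp only: mod_add_self2) simp
  qed
  show ?thesis unfolding r mod_suc_if[OF a(2)] using a by auto
qed


lemma mod_add_if: "(k::nat) < N \<Longrightarrow> j < N \<Longrightarrow> (k + j) mod N = (if k + j < N then k + j else k + j - N)"
proof (cases "k + j < N")
  case False
  assume a: "k < N" "j < N"
  have "k + j = (k + j - N) + N" using False by simp
  hence "(k + j) mod N = (k + j - N) mod N" by (metis mod_add_self2)
  then show ?thesis using False a by simp
qed simp

lemma sub_mod_if: "(k::nat) < N \<Longrightarrow> k' < N \<Longrightarrow> (k' + N - k) mod N = (if k \<le> k' then k' - k else k' + N - k)"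
proof (cases "k \<le> k'")
  case True
  assume a: "k < N" "k' < N"
  have "k' + N - k = (k' - k) + N" using True a by simp
  hence "(k' + N - k) mod N = (k' - k) mod N" by (metis mod_add_self2)
  then show ?thesis using True a by simp
qed simp

lemma plus_iff: "(k::nat) < N \<Longrightarrow> k' < N \<Longrightarrow> j < N \<Longrightarrow> ((k' + N - k) mod N = j) = (k' = (k + j) mod N)"
  unfolding sub_mod_if mod_add_if by auto


lemma deriv_affine: "deriv (\<lambda>t. a * t + b) x = (a::real)"
  by (rule DERIV_imp_deriv) (auto intro!: derivative_eq_intros)

lemma sum_upd: "k \<in> A \<Longrightarrow> finite A \<Longrightarrow> (\<Sum>k'\<in>A. if k' = k then t else f k') = (\<Sum>k'\<in>A. f k') - f k + (t::real)"
proof -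
  assume a: "k \<in> A" "finite A"
  have "(\<Sum>k'\<in>A. if k' = k then t else f k') = (\<Sum>k'\<in>A. f k' + (if k' = k then t - f k else 0))"
    by (rule sum.cong) auto
  also have "\<dots> = (\<Sum>k'\<in>A. f k') + (t - f k)" using a by (simp add: sum.distrib)
  finally show ?thesis by simp
qed

lemma pd_D: "k < N \<Longrightarrow> pd (Ham N \<alpha>) (D k) p = 1 / \<alpha>"
proof -
  assume a: "k < N"
  have "(\<lambda>t. Ham N \<alpha> (p(D k := t))) = (\<lambda>t. (1/\<alpha>) * t + (Ham N \<alpha> p - (1/\<alpha>) * p (D k)))"
  proof
    fix t
    have "(\<Sum>k'<N. (p(D k := t)) (D k')) = (\<Sum>k'<N. if k' = k then t else p (D k'))"
      by (rule sum.cong) auto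
    also have "\<dots> = (\<Sum>k'<N. p (D k')) - p (D k) + t" using a by (simp add: sum_upd)
    finally have h: "(\<Sum>k'<N. (p(D k := t)) (D k')) = (\<Sum>k'<N. p (D k')) - p (D k) + t" .
    show "Ham N \<alpha> (p(D k := t)) = (1/\<alpha>) * t + (Ham N \<alpha> p - (1/\<alpha>) * p (D k))"
      unfolding Ham_def h by (simp add: algebra_simps)
  qed
  then show ?thesis unfolding pd_def by (simp only: deriv_affine)
qed

lemma pd_C: "k < N \<Longrightarrow> pd (Ham N \<alpha>) (C j k) p = (if j = 1 then 1 else 0)"
proof -
  assume a: "k < N"
  have "(\<lambda>t. Ham N \<alpha> (p(C j k := t))) = (\<lambda>t. (if j = 1 then 1 else 0) * t + (Ham N \<alpha> p - (if j = 1 then 1 else 0) * p (C j k)))"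
  proof
    fix t
    show "Ham N \<alpha> (p(C j k := t)) = (if j = 1 then 1 else 0) * t + (Ham N \<alpha> p - (if j = 1 then 1 else 0) * p (C j k))"
    proof (cases "j = 1")
      case True
      have "(\<Sum>k'<N. (p(C j k := t)) (C 1 k')) = (\<Sum>k'<N. if k' = k then t else p (C 1 k'))"
        using True by (intro sum.cong) auto
      also have "\<dots> = (\<Sum>k'<N. p (C 1 k')) - p (C 1 k) + t" using a by (simp add: sum_upd)
      finally have h: "(\<Sum>k'<N. (p(C j k := t)) (C 1 k')) = (\<Sum>k'<N. p (C 1 k')) - p (C 1 k) + t" .
      show ?thesis unfolding Ham_def h using True by (simp add: algebra_simps)
    next
      case False
      then show ?thesis unfolding Ham_def by simp
    qed
  qed
  then show ?thesis unfolding pd_def by (simp only: deriv_affine)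
qed

lemma pbr_Ham:
  assumes "m \<ge> 1"
  shows "pbr N m \<alpha> (Ham N \<alpha>) x p = (1/\<alpha>) * (\<Sum>k<N. br N m \<alpha> (D k) x p) + (\<Sum>k<N. br N m \<alpha> (C 1 k) x p)"
proof -
  let ?S = "D ` {..<N} \<union> C 1 ` {..<N}"
  have fin: "finite (coords N m)"
  proof (rule finite_subset)
    show "coords N m \<subseteq> D ` {..<N} \<union> (\<lambda>(j,k). C j k) ` ({1..m} \<times> {..<N})"
      unfolding coords_def by auto
  qed auto
  have sub: "?S \<subseteq> coords N m" unfolding coords_def using assms by auto
  have "pbr N m \<alpha> (Ham N \<alpha>) x p = (\<Sum>y\<in>?S. pd (Ham N \<alpha>) y p * br N m \<alpha> y x p)"
    unfolding pbr_def
  proof (rule sum.mono_neutral_right[OF fin sub])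
    show "\<forall>y\<in>coords N m - ?S. pd (Ham N \<alpha>) y p * br N m \<alpha> y x p = 0"
      unfolding coords_def by (auto simp: pd_C)
  qed
  also have "\<dots> = (\<Sum>y\<in>D ` {..<N}. pd (Ham N \<alpha>) y p * br N m \<alpha> y x p) + (\<Sum>y\<in>C 1 ` {..<N}. pd (Ham N \<alpha>) y p * br N m \<alpha> y x p)"
    by (rule sum.union_disjoint) auto
  also have "\<dots> = (\<Sum>k<N. pd (Ham N \<alpha>) (D k) p * br N m \<alpha> (D k) x p) + (\<Sum>k<N. pd (Ham N \<alpha>) (C 1 k) p * br N m \<alpha> (C 1 k) x p)"
    by (simp add: sum.reindex inj_on_def)
  also have "\<dots> = (1/\<alpha>) * (\<Sum>k<N. br N m \<alpha> (D k) x p) + (\<Sum>k<N. br N m \<alpha> (C 1 k) x p)"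
    by (simp add: pd_D pd_C sum_distrib_left)
  finally show ?thesis .
qed


lemma int_pre: "(k::nat) < N \<Longrightarrow> int ((k + N - 1) mod N) mod int N = (int k - 1) mod int N"
proof -
  assume a: "k < N"
  have "int ((k + N - 1) mod N) = int (k + N - 1) mod int N" by (simp add: of_nat_mod)
  also have "int (k + N - 1) = (int k - 1) + int N" using a by simp
  finally show ?thesis by simp
qed

lemma int_plus: "int ((k + j) mod N) mod int N = (int k + int j) mod int N"
  by (simp add: of_nat_mod)

lemma cc_nat: "k < N \<Longrightarrow> cc N m p j (int k) = (if 1 \<le> j \<and> j \<le> m then p (C j k) else 0)"
  by (simp add: cc_def)
lemma dd_nat: "k < N \<Longrightarrow> dd N p (int k) = p (D k)"
  by (simp add: dd_def)

lemma pre_ne: "(k::nat) < N \<Longrightarrow> 2 \<le> N \<Longrightarrow> (k + N - 1) mod N \<noteq> k"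
  using pre_iff[of k N k] mod_suc_if[of k N] by (auto split: if_splits)

lemma pre_lt: "(k::nat) < N \<Longrightarrow> (k + N - 1) mod N < N" by simp

lemma brCD:
  assumes "m \<ge> 1" "N \<ge> 2" "k < N" "k' < N"
  shows "br N m \<alpha> (C 1 k') (D k) p =
     (if k' = (k + N - 1) mod N then - cc N m p 1 (int k - 1) * (1 + \<alpha> * dd N p (int k)) else 0)
   + (if k' = k then cc N m p 1 (int k) * (1 + \<alpha> * dd N p (int k)) else 0)"
proof -
  have e: "(k = nat ((int k' + int 1) mod int N)) = (k' = (k + N - 1) mod N)"
    unfolding natmod2 using pre_iff[OF assms(3,4)] by simp
  show ?thesis
  proof (cases "k' = (k + N - 1) mod N")
    case True
    have "cc N m p 1 (int k') = cc N m p 1 (int k - 1)"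
      using True int_pre[OF assms(3)] by (intro cc_cong) simp
    then show ?thesis using True e pre_ne[OF assms(3,2)] unfolding br_def by simp
  next
    case False
    then show ?thesis using e unfolding br_def by auto
  qed
qed


lemma brDC:
  assumes "1 \<le> j" "j < N" "k < N" "k' < N"
  shows "br N m \<alpha> (D k') (C j k) p =
     (if k' = k then - cc N m p j (int k) * (1 + \<alpha> * dd N p (int k)) else 0)
   + (if k' = (k + j) mod N then cc N m p j (int k) * (1 + \<alpha> * dd N p (int k + int j)) else 0)"
proof -
  have ne: "(k + j) mod N \<noteq> k"
    using plus_iff[OF assms(3,3,2)] assms by simp
  have e: "(k' = nat ((int k + int j) mod int N)) = (k' = (k + j) mod N)"
    unfolding natmod2 by simp
  show ?thesis
  proof (cases "k' = (k + j) mod N")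
    case True
    have "dd N p (int k') = dd N p (int k + int j)"
      using True int_plus[of k j N] by (intro dd_cong) simp
    then show ?thesis using True e ne unfolding br_def by simp
  next
    case False
    then show ?thesis using e unfolding br_def by auto
  qed
qed

lemma brCC:
  assumes "1 \<le> j" "j + 1 < N" "k < N" "k' < N"
  shows "br N m \<alpha> (C 1 k') (C j k) p =
     (if k' = (k + N - 1) mod N then - cc N m p (j + 1) (int k - 1) - \<alpha> * cc N m p 1 (int k - 1) * cc N m p j (int k) else 0)
   + (if k' = (k + j) mod N then cc N m p (j + 1) (int k) + \<alpha> * cc N m p j (int k) * cc N m p 1 (int k + int j) else 0)"
proof -
  have l1: "nat ((int k - int k') mod int N) = (k + N - k') mod N" using natmod assms by simp
  have l2: "nat ((int k' - int k) mod int N) = (k' + N - k) mod N" using natmod assms by simp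
  have i1: "((k + N - k') mod N = 1) = (k' = (k + N - 1) mod N)"
    using plus_iff[OF assms(4,3), of 1] pre_iff[OF assms(3,4)] assms by simp
  have i2: "((k' + N - k) mod N = j) = (k' = (k + j) mod N)"
    using plus_iff[OF assms(3,4), of j] assms by simp
  have ne: "\<not> ((k + N - k') mod N = 1 \<and> (k' + N - k) mod N = j)"
    using sub_mod_if[OF assms(3,4)] sub_mod_if[OF assms(4,3)] assms by (auto split: if_splits)
  show ?thesis
  proof (cases "k' = (k + N - 1) mod N")
    case True
    have kk: "k = (k' + 1) mod N" using True pre_iff[OF assms(3,4)] by simp
    have c1: "cc N m p (1 + j) (int k') = cc N m p (j + 1) (int k - 1)"
      using True int_pre[OF assms(3)] by (simp only: add.commute[of 1 j]) (intro cc_cong, simp)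
    have c2: "cc N m p j (int k' + int 1) = cc N m p j (int k)"
      using kk int_plus[of k' 1 N] by (intro cc_cong) simp
    have c3: "cc N m p 1 (int k') = cc N m p 1 (int k - 1)"
      using True int_pre[OF assms(3)] by (intro cc_cong) simp
    have nn: "k' \<noteq> (k + j) mod N" using ne i1 i2 True by simp
    have a1: "nat ((int k - int k') mod int N) = 1" using l1 i1 True by simp
    have L: "listed N m \<alpha> (C 1 k') (C j k) p = Some (- cc N m p (1 + j) (int k') - \<alpha> * cc N m p 1 (int k') * cc N m p j (int k' + int 1))"
      by (simp only: listed.simps Let_def a1 if_True refl)
    have B: "br N m \<alpha> (C 1 k') (C j k) p = - cc N m p (j + 1) (int k - 1) - \<alpha> * cc N m p 1 (int k - 1) * cc N m p j (int k)"
      unfolding br_def L c1 c2 c3 by simp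
    show ?thesis unfolding B using True nn by simp
  next
    case False
    have a0: "nat ((int k - int k') mod int N) \<noteq> 1" using l1 i1 False by simp
    have L1: "listed N m \<alpha> (C 1 k') (C j k) p = None"
      using a0 by (simp add: Let_def)
    show ?thesis
    proof (cases "k' = (k + j) mod N")
      case True2: True
      have c1: "cc N m p 1 (int k + int j) = cc N m p 1 (int k')"
        using True2 int_plus[of k j N] by (intro cc_cong) simp
      have a2: "nat ((int k' - int k) mod int N) = j" using l2 i2 True2 by simp
      have L2: "listed N m \<alpha> (C j k) (C 1 k') p = Some (- cc N m p (j + 1) (int k) - \<alpha> * cc N m p j (int k) * cc N m p 1 (int k + int j))"
        by (simp only: listed.simps Let_def a2 if_True refl)
      have B: "br N m \<alpha> (C 1 k') (C j k) p = cc N m p (j + 1) (int k) + \<alpha> * cc N m p j (int k) * cc N m p 1 (int k + int j)"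
        unfolding br_def L1 L2 by simp
      show ?thesis unfolding B using False True2 by simp
    next
      case False2: False
      have a3: "nat ((int k' - int k) mod int N) \<noteq> j" using l2 i2 False2 by simp
      have L2: "listed N m \<alpha> (C j k) (C 1 k') p = None"
        using a3 by (simp add: Let_def)
      have B: "br N m \<alpha> (C 1 k') (C j k) p = 0"
        unfolding br_def L1 L2 by simp
      show ?thesis unfolding B using False False2 by simp
    qed
  qed
qed


lemma pbr_D:
  assumes "m \<ge> 1" "N \<ge> 2" "k < N"
  shows "pbr N m \<alpha> (Ham N \<alpha>) (D k) p
       = (1 + \<alpha> * dd N p (int k)) * (cc N m p 1 (int k) - cc N m p 1 (int k - 1))"
proof -
  have z: "(\<Sum>k'<N. br N m \<alpha> (D k') (D k) p) = 0" by (simp add: br_def)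
  have "(\<Sum>k'<N. br N m \<alpha> (C 1 k') (D k) p) =
     (\<Sum>k'<N. (if k' = (k + N - 1) mod N then - cc N m p 1 (int k - 1) * (1 + \<alpha> * dd N p (int k)) else 0)
   + (if k' = k then cc N m p 1 (int k) * (1 + \<alpha> * dd N p (int k)) else 0))"
    using assms by (intro sum.cong refl brCD) auto
  also have "\<dots> = - cc N m p 1 (int k - 1) * (1 + \<alpha> * dd N p (int k)) + cc N m p 1 (int k) * (1 + \<alpha> * dd N p (int k))"
    using assms by (simp add: sum.distrib)
  finally show ?thesis unfolding pbr_Ham[OF assms(1)] z by (simp add: algebra_simps)
qed

lemma pbr_C:
  assumes "m \<ge> 1" "N \<ge> 2 * m + 2" "k < N" "1 \<le> j" "j \<le> m" "\<alpha> \<noteq> 0"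
  shows "pbr N m \<alpha> (Ham N \<alpha>) (C j k) p
       = cc N m p j (int k) * (dd N p (int k + int j) - dd N p (int k)
            + \<alpha> * cc N m p 1 (int k + int j) - \<alpha> * cc N m p 1 (int k - 1))
         + (cc N m p (j + 1) (int k) - cc N m p (j + 1) (int k - 1))"
proof -
  have "(\<Sum>k'<N. br N m \<alpha> (D k') (C j k) p) =
     (\<Sum>k'<N. (if k' = k then - cc N m p j (int k) * (1 + \<alpha> * dd N p (int k)) else 0)
   + (if k' = (k + j) mod N then cc N m p j (int k) * (1 + \<alpha> * dd N p (int k + int j)) else 0))"
    using assms by (intro sum.cong refl brDC) auto
  also have "\<dots> = - cc N m p j (int k) * (1 + \<alpha> * dd N p (int k)) + cc N m p j (int k) * (1 + \<alpha> * dd N p (int k + int j))"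
    using assms by (simp add: sum.distrib)
  finally have s1: "(\<Sum>k'<N. br N m \<alpha> (D k') (C j k) p) = - cc N m p j (int k) * (1 + \<alpha> * dd N p (int k)) + cc N m p j (int k) * (1 + \<alpha> * dd N p (int k + int j))" .
  have "(\<Sum>k'<N. br N m \<alpha> (C 1 k') (C j k) p) =
     (\<Sum>k'<N. (if k' = (k + N - 1) mod N then - cc N m p (j + 1) (int k - 1) - \<alpha> * cc N m p 1 (int k - 1) * cc N m p j (int k) else 0)
   + (if k' = (k + j) mod N then cc N m p (j + 1) (int k) + \<alpha> * cc N m p j (int k) * cc N m p 1 (int k + int j) else 0))"
    using assms by (intro sum.cong refl brCC) auto
  also have "\<dots> = (- cc N m p (j + 1) (int k - 1) - \<alpha> * cc N m p 1 (int k - 1) * cc N m p j (int k))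
     + (cc N m p (j + 1) (int k) + \<alpha> * cc N m p j (int k) * cc N m p 1 (int k + int j))"
    using assms by (simp add: sum.distrib)
  finally have s2: "(\<Sum>k'<N. br N m \<alpha> (C 1 k') (C j k) p) = (- cc N m p (j + 1) (int k - 1) - \<alpha> * cc N m p 1 (int k - 1) * cc N m p j (int k))
     + (cc N m p (j + 1) (int k) + \<alpha> * cc N m p j (int k) * cc N m p 1 (int k + int j))" .
  show ?thesis unfolding pbr_Ham[OF assms(1)] s1 s2 using assms(6) by (simp add: field_simps)
qed

theorem mainTheorem17:
  fixes N m :: nat and \<alpha> :: real
  assumes "m \<ge> 1" and "N \<ge> 2 * m + 2" and "\<alpha> \<noteq> 0"
  shows "\<forall>p :: state. \<forall>k<N.
     pbr N m \<alpha> (Ham N \<alpha>) (D k) p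
       = (1 + \<alpha> * dd N p (int k)) * (cc N m p 1 (int k) - cc N m p 1 (int k - 1))
   \<and> (\<forall>j. 1 \<le> j \<and> j \<le> m - 1 \<longrightarrow>
       pbr N m \<alpha> (Ham N \<alpha>) (C j k) p
       = cc N m p j (int k) * (dd N p (int k + int j) - dd N p (int k)
            + \<alpha> * cc N m p 1 (int k + int j) - \<alpha> * cc N m p 1 (int k - 1))
         + (cc N m p (j + 1) (int k) - cc N m p (j + 1) (int k - 1)))
   \<and> pbr N m \<alpha> (Ham N \<alpha>) (C m k) p
       = cc N m p m (int k) * (dd N p (int k + int m) - dd N p (int k)
            + \<alpha> * cc N m p 1 (int k + int m) - \<alpha> * cc N m p 1 (int k - 1))"
proof (intro allI impI conjI)
  fix p :: state and k assume k: "k < N"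
  show "pbr N m \<alpha> (Ham N \<alpha>) (D k) p
       = (1 + \<alpha> * dd N p (int k)) * (cc N m p 1 (int k) - cc N m p 1 (int k - 1))"
    using pbr_D[OF assms(1) _ k] assms(2) by simp
  fix j assume j: "1 \<le> j \<and> j \<le> m - 1"
  then show "pbr N m \<alpha> (Ham N \<alpha>) (C j k) p
       = cc N m p j (int k) * (dd N p (int k + int j) - dd N p (int k)
            + \<alpha> * cc N m p 1 (int k + int j) - \<alpha> * cc N m p 1 (int k - 1))
         + (cc N m p (j + 1) (int k) - cc N m p (j + 1) (int k - 1))"
    using pbr_C[OF assms(1,2) k _ _ assms(3), of j p] j by simp
next
  fix p :: state and k assume k: "k < N"
  have z: "cc N m p (m + 1) x = 0" for x by (simp add: cc_def)
  show "pbr N m \<alpha> (Ham N \<alpha>) (C m k) p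
       = cc N m p m (int k) * (dd N p (int k + int m) - dd N p (int k)
            + \<alpha> * cc N m p 1 (int k + int m) - \<alpha> * cc N m p 1 (int k - 1))"
    using pbr_C[OF assms(1,2) k assms(1) order_refl assms(3), of p] unfolding z by simp
qed

end
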